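(* Let $n>5$ with $n\equiv 1\pmod 4$ and put $m=n-1$. Over all even $r\in[2,n-3]$, $E(D_n^s[\boldsymbol r,\boldsymbol{n-r-1}])$ attains its maximum at $r=4$. More precisely: if $\frac m2\equiv 0\pmod 4$, then $E(D_n^s[\boldsymbol r,\boldsymbol{m-r}])$ is strictly decreasing as $r$ runs through $4,8,\dots,\frac m2,\ \frac m2-2,\frac m2-6,\dots,2$ (in this order); if $\frac m2\equiv 2\pmod 4$, then it is strictly decreasing as $r$ runs through $4,8,\dots,\frac m2-2,\ \frac m2,\frac m2-4,\dots,2$.
   Context: A signed digraph (sidigraph) is a digraph in which every arc carries a sign $+1$ or $-1$; its adjacency matrix $A(S)=[a_{ij}]$ has $a_{ij}$ equal to the sign of the arc $w_iw_j$ if it exists and $0$ otherwise. If $\rho_1,\dots,\rho_n$ are the eigenvalues of $A(S)$, the energy of $S$ is $E(S)=\sum_{k=1}^n|\mathrm{Re}(\rho_k)|$. The sign of a directed cycle is the product of the signs of its arcs. For $k\ge 2$, $C_k$ denotes a directed cycle of length $k$ with sign $+1$ and $\boldsymbol{C}_k$ a directed cycle of length $k$ with sign $-1$. It is known that $E(C_k)=2\cot\frac{\pi}{k}$ if $k\equiv0\pmod 4$, $2\csc\frac{\pi}{k}$ if $k\equiv 2\pmod 4$, $\csc\frac{\pi}{2k}$ if $k$ is odd; and $E(\boldsymbol C_k)=2\csc\frac{\pi}{k}$ if $k\equiv0\pmod 4$, $2\cot\frac{\pi}{k}$ if $k\equiv 2\pmod 4$, $\csc\frac{\pi}{2k}$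 if $k$ is odd. For integers $p,q\ge 2$ with $p+q\le n$, $D_n^s[p,q]$, $D_n^s[\boldsymbol p,\boldsymbol q]$, $D_n^s[\boldsymbol p,q]$, $D_n^s[p,\boldsymbol q]$ denote an $n$-vertex sidigraph whose only directed cycles are two vertex-disjoint cycles of lengths $p$ and $q$ (all other vertices lying on no directed cycle), where a bold entry indicates that the cycle of that length is negative and a non-bold entry that it is positive. Its energy is the sum of the energies of its two cycles, e.g. $E(D_n^s[\boldsymbol p,\boldsymbol q])=E(\boldsymbol C_p)+E(\boldsymbol C_q)$; in particular the order of the two entries does not matter. *)

theory Defs
  imports Complex_Main
begin

text \<open>Energy of the negative directed cycle of length k (k \<ge> 2), as given in the
  paper's context: 2 csc(pi/k) if k = 0 mod 4, 2 cot(pi/k) if k = 2 mod 4,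
  csc(pi/(2k)) if k odd.\<close>
definition neg_cycle_energy :: "nat \<Rightarrow> real" where
  "neg_cycle_energy k =
     (if k mod 4 = 0 then 2 / sin (pi / real k)
      else if k mod 4 = 2 then 2 * cot (pi / real k)
      else 1 / sin (pi / (2 * real k)))"

text \<open>Energy of D_n^s[p-bold, q-bold]: sum of the energies of its two negative cycles.\<close>
definition energy_D_negneg :: "nat \<Rightarrow> nat \<Rightarrow> real" where
  "energy_D_negneg p q = neg_cycle_energy p + neg_cycle_energy q"

end

theory Submission
  imports Defs
begin

lemma sin_lt_x: fixes t :: real assumes "0 < t" "t \<le> pi/2" shows "sin t < t"
proof -
  have "(\<lambda>u. u - sin u) 0 < (\<lambda>u. u - sin u) t"
  proof (rule DERIV_pos_imp_increasing_open[OF assms(1)])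
    fix u :: real assume u: "0 < u" "u < t"
    have "cos u < cos 0" using u assms by (intro cos_monotone_0_pi) auto
    then show "\<exists>y. DERIV (\<lambda>u. u - sin u) u :> y \<and> y > 0"
      by (intro exI[of _ "1 - cos u"]) (auto intro!: derivative_eq_intros)
  qed (intro continuous_intros)
  then show ?thesis by simp
qed

lemma tcos_lt_sin: fixes t :: real assumes "0 < t" "t < pi/2" shows "t * cos t < sin t"
proof -
  have "(\<lambda>u. sin u - u * cos u) 0 < (\<lambda>u. sin u - u * cos u) t"
  proof (rule DERIV_pos_imp_increasing_open[OF assms(1)])
    fix u :: real assume u: "0 < u" "u < t"
    have "sin u > 0" using u assms by (intro sin_gt_zero) auto
    then have "u * sin u > 0" using u by simp
    then show "\<exists>y. DERIV (\<lambda>u. sin u - u * cos u) u :> y \<and> y > 0"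
      by (intro exI[of _ "u * sin u"]) (auto intro!: derivative_eq_intros)
  qed (intro continuous_intros)
  then show ?thesis by simp
qed

definition psi :: "real \<Rightarrow> real" where "psi t = t^2 * cos t / (sin t)^2"

lemma psi_deriv: fixes u :: real assumes "sin u \<noteq> 0"
  shows "DERIV psi u :> ((2*u*cos u - u^2*sin u) * (sin u)^2 - u^2 * cos u * (2 * sin u * cos u)) / ((sin u)^2 * (sin u)^2)"
  unfolding psi_def[abs_def] using assms
  by (auto intro!: derivative_eq_intros simp: power2_eq_square algebra_simps)

lemma psi_dec: fixes s t :: real assumes "0 < s" "s < t" "t \<le> pi/2" shows "psi t < psi s"
proof (rule DERIV_neg_imp_decreasing_open[OF assms(2)])
  fix u assume u: "s < u" "u < t"
  have su: "sin u > 0" using u assms by (intro sin_gt_zero) auto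
  have cu: "cos u > 0" using u assms by (intro cos_gt_zero_pi) auto
  have c1: "cos u < 1" using cos_monotone_0_pi[of 0 u] u assms by auto
  have sl: "sin u < u" using sin_lt_x[of u] u assms by auto
  have i1: "2 * sin u * cos u \<le> 2 * u * cos u" using sl cu by (simp add: mult_right_mono)
  have "0 < (1 - cos u)^2" using c1 by simp
  then have "2 * cos u < 1 + (cos u)^2" by (simp add: power2_eq_square algebra_simps)
  then have "2 * cos u < (sin u)^2 + 2 * (cos u)^2" using sin_cos_squared_add[of u] by linarith
  then have i2: "u * (2 * cos u) < u * ((sin u)^2 + 2 * (cos u)^2)" using u assms by simp
  have inner: "2 * sin u * cos u - u * (sin u)^2 - 2 * u * (cos u)^2 < 0" using i1 i2 by (simp add: algebra_simps)
  have num: "(2*u*cos u - u^2*sin u) * (sin u)^2 - u^2 * cos u * (2 * sin u * cos u)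
     = (u * sin u) * (2 * sin u * cos u - u * (sin u)^2 - 2 * u * (cos u)^2)"
    by (simp add: power2_eq_square algebra_simps)
  have "(u * sin u) * (2 * sin u * cos u - u * (sin u)^2 - 2 * u * (cos u)^2) < 0"
    using inner su u assms by (intro mult_pos_neg) auto
  then have "((2*u*cos u - u^2*sin u) * (sin u)^2 - u^2 * cos u * (2 * sin u * cos u)) / ((sin u)^2 * (sin u)^2) < 0"
    using su num by (simp add: divide_neg_pos)
  then show "\<exists>y. DERIV psi u :> y \<and> y < 0" using psi_deriv[of u] su by auto
next
  show "continuous_on {s..t} psi"
  proof (rule DERIV_atLeastAtMost_imp_continuous_on)
    fix x assume "s \<le> x" "x \<le> t"
    then have "sin x > 0" using assms by (intro sin_gt_zero) auto
    then show "\<exists>y. DERIV psi x :> y" using psi_deriv[of x] by auto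
  qed
qed

definition cc :: "real \<Rightarrow> real" where "cc x = 1 / sin (pi / x)"
definition gg :: "real \<Rightarrow> real" where "gg x = cot (pi / x)"
definition pp :: "real \<Rightarrow> real" where "pp x = x * sin (pi / x)"

lemma sin_pos2: fixes x :: real assumes "2 \<le> x" shows "sin (pi / x) > 0"
proof -
  have "pi / x \<le> pi / 2" using divide_left_mono[of 2 x pi] assms by simp
  moreover have "pi / x > 0" using assms by simp
  ultimately show ?thesis using pi_gt_zero by (intro sin_gt_zero) linarith+
qed

lemma pi_x_le: fixes x :: real assumes "2 \<le> x" shows "pi / x \<le> pi / 2" "0 < pi / x"
  using divide_left_mono[of 2 x pi] assms by auto

lemma cc_deriv: fixes x :: real assumes "2 \<le> x" shows "DERIV cc x :> psi (pi / x) / pi"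
proof -
  have s: "sin (pi / x) > 0" using sin_pos2[OF assms] .
  have "DERIV cc x :> pi * cos (pi / x) / (x^2 * (sin (pi / x))^2)"
    unfolding cc_def[abs_def] using s assms
    by (auto intro!: derivative_eq_intros simp: power2_eq_square field_simps)
  moreover have "psi (pi / x) / pi = pi * cos (pi / x) / (x^2 * (sin (pi / x))^2)"
    unfolding psi_def using s assms by (simp add: power2_eq_square field_simps)
  ultimately show ?thesis by simp
qed

lemma gg_deriv: fixes x :: real assumes "2 \<le> x" shows "DERIV gg x :> pi / (pp x)^2"
proof -
  have s: "sin (pi / x) > 0" using sin_pos2[OF assms] .
  show ?thesis
    unfolding gg_def[abs_def] pp_def cot_def using s assms
    apply (auto intro!: derivative_eq_intros simp: power2_eq_square field_simps)
    using sin_cos_squared_add[of "pi/x"] by (simp add: power2_eq_square distrib_left[symmetric])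
qed

lemma pp_inc: fixes x y :: real assumes "2 \<le> x" "x < y" shows "pp x < pp y"
proof (rule DERIV_pos_imp_increasing_open[OF assms(2)])
  fix z assume z: "x < z" "z < y"
  have "pi / z < pi / 2" using z assms by (intro divide_strict_left_mono) auto
  then have "(pi / z) * cos (pi / z) < sin (pi / z)" using z assms by (intro tcos_lt_sin) auto
  moreover have "DERIV pp z :> sin (pi / z) - (pi / z) * cos (pi / z)"
    unfolding pp_def[abs_def] using z assms
    by (auto intro!: derivative_eq_intros simp: power2_eq_square field_simps)
  ultimately show "\<exists>d. DERIV pp z :> d \<and> d > 0" by (intro exI[of _ "sin (pi / z) - (pi / z) * cos (pi / z)"]) auto
next
  show "continuous_on {x..y} pp" unfolding pp_def using assms by (intro continuous_intros) auto
qed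

lemma h_dec: fixes a b M :: real assumes "2 \<le> a" "a < b" "b \<le> M/2"
  shows "cc b + cc (M - b) < cc a + cc (M - a)"
proof -
  have D: "\<And>x. a \<le> x \<Longrightarrow> x \<le> b \<Longrightarrow> DERIV (\<lambda>x. cc x + cc (M - x)) x :> psi (pi / x) / pi - psi (pi / (M - x)) / pi"
    using assms
    by (auto intro!: derivative_eq_intros cc_deriv[THEN DERIV_chain2] cc_deriv)
  show ?thesis
proof (rule DERIV_neg_imp_decreasing_open[OF assms(2), where f = "\<lambda>x. cc x + cc (M - x)"])
  fix x assume x: "a < x" "x < b"
  have d: "DERIV (\<lambda>x. cc x + cc (M - x)) x :> psi (pi / x) / pi - psi (pi / (M - x)) / pi"
    using x D by auto
  have "psi (pi / x) < psi (pi / (M - x))"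
  proof (rule psi_dec)
    show "0 < pi / (M - x)" using x assms by simp
    show "pi / (M - x) < pi / x" using x assms by (intro divide_strict_left_mono) auto
    show "pi / x \<le> pi / 2" using x assms by (intro pi_x_le) auto
  qed
  then have "psi (pi / x) / pi - psi (pi / (M - x)) / pi < 0" by (simp add: divide_strict_right_mono)
  then show "\<exists>y. DERIV (\<lambda>x. cc x + cc (M - x)) x :> y \<and> y < 0" using d by blast
next
  show "continuous_on {a..b} (\<lambda>x. cc x + cc (M - x))"
  proof (rule DERIV_atLeastAtMost_imp_continuous_on)
    fix x assume x: "a \<le> x" "x \<le> b"
    show "\<exists>y. DERIV (\<lambda>x. cc x + cc (M - x)) x :> y"
      using x D by blast
  qed
qed
qed

lemma k_inc: fixes a b M :: real assumes "2 \<le> a" "a < b" "b \<le> M/2"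
  shows "gg a + gg (M - a) < gg b + gg (M - b)"
proof -
  have D: "\<And>x. a \<le> x \<Longrightarrow> x \<le> b \<Longrightarrow> DERIV (\<lambda>x. gg x + gg (M - x)) x :> pi / (pp x)^2 - pi / (pp (M - x))^2"
    using assms
    by (auto intro!: derivative_eq_intros gg_deriv[THEN DERIV_chain2] gg_deriv)
  show ?thesis
proof (rule DERIV_pos_imp_increasing_open[OF assms(2), where f = "\<lambda>x. gg x + gg (M - x)"])
  fix x assume x: "a < x" "x < b"
  have d: "DERIV (\<lambda>x. gg x + gg (M - x)) x :> pi / (pp x)^2 - pi / (pp (M - x))^2"
    using x D by auto
  have p0: "0 < pp x" unfolding pp_def using sin_pos2[of x] x assms by simp
  have p1: "0 < pp (M - x)" unfolding pp_def using sin_pos2[of "M - x"] x assms by simp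
  have "pp x < pp (M - x)" using x assms by (intro pp_inc) auto
  then have "(pp x)^2 < (pp (M - x))^2" using p0 by (intro power_strict_mono) auto
  then have "pi / (pp (M - x))^2 < pi / (pp x)^2" using p0 p1 by (intro divide_strict_left_mono) auto
  then show "\<exists>y. DERIV (\<lambda>x. gg x + gg (M - x)) x :> y \<and> y > 0" using d by (intro exI) auto
next
  show "continuous_on {a..b} (\<lambda>x. gg x + gg (M - x))"
  proof (rule DERIV_atLeastAtMost_imp_continuous_on)
    fix x assume x: "a \<le> x" "x \<le> b"
    show "\<exists>y. DERIV (\<lambda>x. gg x + gg (M - x)) x :> y"
      using x D by blast
  qed
qed
qed

lemma cc_gt: fixes x :: real assumes "2 \<le> x" shows "x / pi < cc x"
proof -
  have s: "sin (pi / x) > 0" using sin_pos2[OF assms] .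
  have "sin (pi / x) < pi / x" using pi_x_le[OF assms] by (intro sin_lt_x) auto
  then have "1 / (pi / x) < 1 / sin (pi / x)" using s assms by (intro divide_strict_left_mono) auto
  then show ?thesis unfolding cc_def by simp
qed

lemma gg_lt: fixes x :: real assumes "2 \<le> x" shows "gg x < x / pi"
proof (cases "x = 2")
  case True then show ?thesis unfolding gg_def cot_def by simp
next
  case False
  have s: "sin (pi / x) > 0" using sin_pos2[OF assms] .
  have "pi / x < pi / 2" using assms False by (intro divide_strict_left_mono) auto
  then have "(pi / x) * cos (pi / x) < sin (pi / x)" using pi_x_le[OF assms] by (intro tcos_lt_sin) auto
  then have "cos (pi / x) < sin (pi / x) / (pi / x)" using assms by (simp add: field_simps)
  then have "cos (pi / x) / sin (pi / x) < 1 / (pi / x)" using s by (simp add: field_simps)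
  then show ?thesis unfolding gg_def cot_def by simp
qed


lemma mod4_form: fixes x k c :: nat assumes "x = 4 * k + c" "c < 4" shows "x mod 4 = c"
  using assms by simp
lemma mod4_split: fixes x :: nat shows "x = 4 * (x div 4) + x mod 4" by simp
lemma even_mod4: fixes r :: nat assumes "even r" "r mod 4 \<noteq> 0" shows "r mod 4 = 2"
proof -
  have "r mod 4 < 4" by simp
  moreover have ev: "even (r mod 4)" using assms(1) by (intro dvd_mod) auto
  ultimately have "r mod 4 = 0 \<or> r mod 4 = 1 \<or> r mod 4 = 2 \<or> r mod 4 = 3" by arith
  moreover have "r mod 4 \<noteq> 1" using \<open>even (r mod 4)\<close> by (metis odd_one)
  moreover have "r mod 4 \<noteq> 3" using \<open>even (r mod 4)\<close> by (metis even_numeral odd_numeral)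
  ultimately show ?thesis using assms(2) by blast
qed

lemma mod_sub0: fixes m r :: nat assumes "m mod 4 = 0" "r mod 4 = 0" "r \<le> m" shows "(m - r) mod 4 = 0"
proof -
  have m: "m = 4 * (m div 4)" using mod4_split[of m] assms(1) by linarith
  have r: "r = 4 * (r div 4)" using mod4_split[of r] assms(2) by linarith
  have "m - r = 4 * (m div 4 - r div 4) + 0" using m r by linarith
  then show ?thesis by (rule mod4_form) simp
qed

lemma mod_sub2: fixes m r :: nat assumes "m mod 4 = 0" "r mod 4 = 2" "r \<le> m" shows "(m - r) mod 4 = 2"
proof -
  have m: "m = 4 * (m div 4)" using mod4_split[of m] assms(1) by linarith
  have r: "r = 4 * (r div 4) + 2" using mod4_split[of r] assms(2) by linarith
  have lt: "r div 4 < m div 4" using assms(3) m r by linarith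
  have "m - r = 4 * (m div 4 - r div 4 - 1) + 2" using m r lt by linarith
  then show ?thesis by (rule mod4_form) simp
qed

lemma E_0: fixes m r :: nat assumes "m mod 4 = 0" "r mod 4 = 0" "4 \<le> r" "r + 4 \<le> m"
  shows "energy_D_negneg r (m - r) = 2 * (cc (real r) + cc (real m - real r))"
proof -
  have mr: "(m - r) mod 4 = 0" using assms by (intro mod_sub0) auto
  have a: "neg_cycle_energy r = 2 * cc (real r)" using assms(2) unfolding neg_cycle_energy_def cc_def by simp
  have b: "neg_cycle_energy (m - r) = 2 * cc (real (m - r))" using mr unfolding neg_cycle_energy_def cc_def by simp
  have c: "real (m - r) = real m - real r" using assms by (simp add: of_nat_diff)
  show ?thesis unfolding energy_D_negneg_def a b c by (simp add: algebra_simps)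
qed


lemma E_2: fixes m r :: nat assumes "m mod 4 = 0" "r mod 4 = 2" "r \<le> m"
  shows "energy_D_negneg r (m - r) = 2 * (gg (real r) + gg (real m - real r))"
proof -
  have mr: "(m - r) mod 4 = 2" using assms by (intro mod_sub2) auto
  have a: "neg_cycle_energy r = 2 * gg (real r)" using assms(2) unfolding neg_cycle_energy_def gg_def by simp
  have b: "neg_cycle_energy (m - r) = 2 * gg (real (m - r))" using mr unfolding neg_cycle_energy_def gg_def by simp
  have c: "real (m - r) = real m - real r" using assms by (simp add: of_nat_diff)
  show ?thesis unfolding energy_D_negneg_def a b c by (simp add: algebra_simps)
qed
lemma F_gt: fixes m r :: nat assumes "m mod 4 = 0" "r mod 4 = 0" "4 \<le> r" "r + 4 \<le> m"
  shows "2 * real m / pi < energy_D_negneg r (m - r)"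
proof -
  have "real r / pi < cc (real r)" using assms by (intro cc_gt) auto
  moreover have "(real m - real r) / pi < cc (real m - real r)" using assms by (intro cc_gt) auto
  ultimately have "real r / pi + (real m - real r) / pi < cc (real r) + cc (real m - real r)" by simp
  moreover have "real r / pi + (real m - real r) / pi = real m / pi" by (simp add: field_simps)
  ultimately show ?thesis using E_0[OF assms] by simp
qed

lemma G_lt: fixes m r :: nat assumes "m mod 4 = 0" "r mod 4 = 2" "2 \<le> r" "r + 2 \<le> m"
  shows "energy_D_negneg r (m - r) < 2 * real m / pi"
proof -
  have "gg (real r) < real r / pi" using assms by (intro gg_lt) auto
  moreover have "gg (real m - real r) < (real m - real r) / pi" using assms by (intro gg_lt) auto
  ultimately have "gg (real r) + gg (real m - real r) < real r / pi + (real m - real r) / pi" by simp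
  moreover have "real r / pi + (real m - real r) / pi = real m / pi" by (simp add: field_simps)
  ultimately show ?thesis using E_2[of m r] assms by simp
qed

lemma F_mono: fixes m a b :: nat assumes "m mod 4 = 0" "a mod 4 = 0" "b mod 4 = 0" "4 \<le> a" "a < b" "2 * b \<le> m"
  shows "energy_D_negneg b (m - b) < energy_D_negneg a (m - a)"
proof -
  have "cc (real b) + cc (real m - real b) < cc (real a) + cc (real m - real a)"
    using assms by (intro h_dec) auto
  then show ?thesis using E_0[of m a] E_0[of m b] assms by simp
qed

lemma G_mono: fixes m a b :: nat assumes "m mod 4 = 0" "a mod 4 = 2" "b mod 4 = 2" "2 \<le> a" "a < b" "2 * b \<le> m"
  shows "energy_D_negneg a (m - a) < energy_D_negneg b (m - b)"
proof -
  have "gg (real a) + gg (real m - real a) < gg (real b) + gg (real m - real b)"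
    using assms by (intro k_inc) auto
  then show ?thesis using E_2[of m a] E_2[of m b] assms by simp
qed

lemma sorted_app: "sorted_wrt (\<lambda>a b. a > b) (map E (xs @ ys)) \<longleftrightarrow>
   sorted_wrt (\<lambda>a b. E a > E b) xs \<and> sorted_wrt (\<lambda>a b. E a > E b) ys \<and> (\<forall>x\<in>set xs. \<forall>y\<in>set ys. E x > E y)"
  by (simp add: sorted_wrt_append sorted_wrt_map)

lemma sorted_upt: "sorted_wrt P (map f [0..<K]) \<longleftrightarrow> (\<forall>i j. i < j \<longrightarrow> j < K \<longrightarrow> P (f i) (f j))"
  by (simp add: sorted_wrt_iff_nth_less)



lemma xs_part: fixes m :: nat assumes m4: "m mod 4 = 0"
  shows "sorted_wrt (\<lambda>a b. energy_D_negneg a (m - a) > energy_D_negneg b (m - b)) (map (\<lambda>i. 4 * (i + 1)) [0..<m div 8])"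
    "\<forall>x\<in>set (map (\<lambda>i. 4 * (i + 1)) [0..<m div 8]). energy_D_negneg x (m - x) > 2 * real m / pi"
proof -
  have le: "8 * (m div 8) \<le> m" by simp
  show "sorted_wrt (\<lambda>a b. energy_D_negneg a (m - a) > energy_D_negneg b (m - b)) (map (\<lambda>i. 4 * (i + 1)) [0..<m div 8])"
    unfolding sorted_upt
  proof (intro allI impI)
    fix i j :: nat assume "i < j" "j < m div 8"
    then show "energy_D_negneg (4 * (j + 1)) (m - 4 * (j + 1)) < energy_D_negneg (4 * (i + 1)) (m - 4 * (i + 1))"
      using m4 le by (intro F_mono) auto
  qed
  show "\<forall>x\<in>set (map (\<lambda>i. 4 * (i + 1)) [0..<m div 8]). energy_D_negneg x (m - x) > 2 * real m / pi"
  proof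
    fix x assume "x \<in> set (map (\<lambda>i. 4 * (i + 1)) [0..<m div 8])"
    then obtain i where "i < m div 8" "x = 4 * (i + 1)" by auto
    then show "energy_D_negneg x (m - x) > 2 * real m / pi" using m4 le by (intro F_gt) auto
  qed
qed

theorem lemma3p10:
  fixes n m :: nat
  assumes "n > 5" and "n mod 4 = 1" and "m = n - 1"
  shows "(\<forall>r. even r \<and> 2 \<le> r \<and> r \<le> n - 3 \<longrightarrow>
            energy_D_negneg r (n - r - 1) \<le> energy_D_negneg 4 (n - 4 - 1))
    \<and> ((m div 2) mod 4 = 0 \<longrightarrow>
         sorted_wrt (\<lambda>a b. a > b)
           (map (\<lambda>r. energy_D_negneg r (m - r))
              (map (\<lambda>i. 4 * (i + 1)) [0..<m div 8] @
               map (\<lambda>i. m div 2 - 2 - 4 * i) [0..<m div 8])))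
    \<and> ((m div 2) mod 4 = 2 \<longrightarrow>
         sorted_wrt (\<lambda>a b. a > b)
           (map (\<lambda>r. energy_D_negneg r (m - r))
              (map (\<lambda>i. 4 * (i + 1)) [0..<m div 8] @
               map (\<lambda>i. m div 2 - 4 * i) [0..<m div 8 + 1])))"
proof -
  define E where "E r = energy_D_negneg r (m - r)" for r
  define q where "q = n div 4"
  have nq: "n = 4 * q + 1" using mod4_split[of n] assms(2) unfolding q_def by linarith
  have mq: "m = 4 * q" using nq assms(3) by simp
  have q2: "2 \<le> q" using nq assms(1) by linarith
  have m4: "m mod 4 = 0" using mq by simp
  have m8: "8 \<le> m" using mq q2 by linarith
  have xs: "sorted_wrt (\<lambda>a b. E a > E b) (map (\<lambda>i. 4 * (i + 1)) [0..<m div 8])"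
    and xsb: "\<forall>x\<in>set (map (\<lambda>i. 4 * (i + 1)) [0..<m div 8]). E x > 2 * real m / pi"
    unfolding E_def using xs_part[OF m4] by auto
  have E4: "2 * real m / pi < E 4" unfolding E_def using m4 m8 by (intro F_gt) auto
  have part1: "\<forall>r. even r \<and> 2 \<le> r \<and> r \<le> n - 3 \<longrightarrow>
            energy_D_negneg r (n - r - 1) \<le> energy_D_negneg 4 (n - 4 - 1)"
  proof (intro allI impI)
    fix r assume r: "even r \<and> 2 \<le> r \<and> r \<le> n - 3"
    have rm: "r + 2 \<le> m" using r assms by linarith
    have eq1: "energy_D_negneg r (n - r - 1) = E r" "energy_D_negneg 4 (n - 4 - 1) = E 4"
      unfolding E_def using assms by (simp_all add: diff_commute)
    have "E r \<le> E 4"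
    proof (cases "r mod 4 = 0")
      case False
      then have "r mod 4 = 2" using r by (intro even_mod4) auto
      then have "E r < 2 * real m / pi" unfolding E_def using r m4 rm by (intro G_lt) auto
      then show ?thesis using E4 by simp
    next
      case True
      have rr: "r = 4 * (r div 4)" using mod4_split[of r] True by linarith
      have d1: "1 \<le> r div 4" using rr r by (cases "r div 4") auto
      have r4: "4 \<le> r" using rr d1 by linarith
      have mr: "(m - r) mod 4 = 0" using True m4 rm by (intro mod_sub0) auto
      have "r div 4 < q" using rr rm mq by linarith
      then have "r div 4 + 1 \<le> q" by simp
      then have rm4: "r + 4 \<le> m" using rr mq by linarith
      have sym: "E r = E (m - r)" unfolding E_def energy_D_negneg_def using rm by simp
      show ?thesis
      proof (cases "2 * r \<le> m")
        case True
        show ?thesis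
        proof (cases "r = 4")
          case False
          then have "E r < E 4" unfolding E_def using \<open>r mod 4 = 0\<close> True r4 m4 by (intro F_mono[of m 4 r]) auto
          then show ?thesis by simp
        qed simp
      next
        case False
        have "E (m - r) \<le> E 4"
        proof (cases "m - r = 4")
          case F2: False
          then have "E (m - r) < E 4" unfolding E_def using mr False rm4 m4
            by (intro F_mono[of m 4 "m - r"]) auto
          then show ?thesis by simp
        qed simp
        then show ?thesis using sym by simp
      qed
    qed
    then show "energy_D_negneg r (n - r - 1) \<le> energy_D_negneg 4 (n - 4 - 1)" using eq1 by simp
  qed
  have part2: "(m div 2) mod 4 = 0 \<longrightarrow>
         sorted_wrt (\<lambda>a b. a > b)
           (map (\<lambda>r. energy_D_negneg r (m - r))
              (map (\<lambda>i. 4 * (i + 1)) [0..<m div 8] @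
               map (\<lambda>i. m div 2 - 2 - 4 * i) [0..<m div 8]))"
  proof
    assume c: "(m div 2) mod 4 = 0"
    have qe: "even q"
    proof (rule ccontr)
      assume "odd q"
      then obtain K where "q = 2 * K + 1" using oddE by blast
      then have "m div 2 = 4 * K + 2" using mq by simp
      then have "m div 2 mod 4 = 2" by (auto intro: mod4_form)
      then show False using c by simp
    qed
    then obtain K where "q = 2 * K" using evenE by blast
    then have K: "m = 8 * K" using mq by simp
    have d2: "m div 2 = 4 * K" "m div 8 = K" using K by simp_all
    have ys: "sorted_wrt (\<lambda>a b. E a > E b) (map (\<lambda>i. m div 2 - 2 - 4 * i) [0..<m div 8])"
      unfolding sorted_upt E_def d2
    proof (intro allI impI)
      fix i j :: nat assume ij: "i < j" "j < K"
      have "4 * K - 2 - 4 * j = 4 * (K - j - 1) + 2" "4 * K - 2 - 4 * i = 4 * (K - i - 1) + 2" using ij by linarith+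
      then have "(4 * K - 2 - 4 * j) mod 4 = 2" "(4 * K - 2 - 4 * i) mod 4 = 2" by (auto intro: mod4_form)
      then show "energy_D_negneg (4 * K - 2 - 4 * j) (m - (4 * K - 2 - 4 * j)) < energy_D_negneg (4 * K - 2 - 4 * i) (m - (4 * K - 2 - 4 * i))"
        using m4 ij K by (intro G_mono) auto
    qed
    have ysb: "\<forall>y\<in>set (map (\<lambda>i. m div 2 - 2 - 4 * i) [0..<m div 8]). E y < 2 * real m / pi"
      unfolding d2
    proof
      fix x assume "x \<in> set (map (\<lambda>i. 4 * K - 2 - 4 * i) [0..<K])"
      then obtain i where i: "i < K" "x = 4 * K - 2 - 4 * i" by auto
      have "x = 4 * (K - i - 1) + 2" using i by linarith
      then have "x mod 4 = 2" by (auto intro: mod4_form)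
      then show "E x < 2 * real m / pi" unfolding E_def using m4 i K by (intro G_lt) auto
    qed
    show "sorted_wrt (\<lambda>a b. a > b)
           (map (\<lambda>r. energy_D_negneg r (m - r))
              (map (\<lambda>i. 4 * (i + 1)) [0..<m div 8] @
               map (\<lambda>i. m div 2 - 2 - 4 * i) [0..<m div 8]))"
    proof -
      have fe: "(\<lambda>r. energy_D_negneg r (m - r)) = E" by (simp add: E_def fun_eq_iff)
      have "\<forall>x\<in>set (map (\<lambda>i. 4 * (i + 1)) [0..<m div 8]). \<forall>y\<in>set (map (\<lambda>i. m div 2 - 2 - 4 * i) [0..<m div 8]). E x > E y"
        using xsb ysb by (meson less_trans)
      then show ?thesis unfolding fe sorted_app using xs ys by blast
    qed
  qed
  have part3: "(m div 2) mod 4 = 2 \<longrightarrow>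
         sorted_wrt (\<lambda>a b. a > b)
           (map (\<lambda>r. energy_D_negneg r (m - r))
              (map (\<lambda>i. 4 * (i + 1)) [0..<m div 8] @
               map (\<lambda>i. m div 2 - 4 * i) [0..<m div 8 + 1]))"
  proof
    assume c: "(m div 2) mod 4 = 2"
    have qo: "odd q"
    proof
      assume "even q"
      then obtain K where "q = 2 * K" using evenE by blast
      then have "m div 2 = 4 * K" using mq by simp
      then show False using c by simp
    qed
    then obtain K where "q = 2 * K + 1" using oddE by blast
    then have K: "m = 8 * K + 4" using mq by simp
    have d2: "m div 2 = 4 * K + 2" "m div 8 = K" using K by simp_all
    have ys: "sorted_wrt (\<lambda>a b. E a > E b) (map (\<lambda>i. m div 2 - 4 * i) [0..<m div 8 + 1])"
      unfolding sorted_upt E_def d2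
    proof (intro allI impI)
      fix i j :: nat assume ij: "i < j" "j < K + 1"
      have "4 * K + 2 - 4 * j = 4 * (K - j) + 2" "4 * K + 2 - 4 * i = 4 * (K - i) + 2" using ij by linarith+
      then have "(4 * K + 2 - 4 * j) mod 4 = 2" "(4 * K + 2 - 4 * i) mod 4 = 2" by (auto intro: mod4_form)
      then show "energy_D_negneg (4 * K + 2 - 4 * j) (m - (4 * K + 2 - 4 * j)) < energy_D_negneg (4 * K + 2 - 4 * i) (m - (4 * K + 2 - 4 * i))"
        using m4 ij K by (intro G_mono) auto
    qed
    have ysb: "\<forall>y\<in>set (map (\<lambda>i. m div 2 - 4 * i) [0..<m div 8 + 1]). E y < 2 * real m / pi"
      unfolding d2
    proof
      fix x assume "x \<in> set (map (\<lambda>i. 4 * K + 2 - 4 * i) [0..<K + 1])"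
      then obtain i where i: "i < K + 1" "x = 4 * K + 2 - 4 * i" unfolding set_map set_upt by auto
      have "x = 4 * (K - i) + 2" using i by linarith
      then have "x mod 4 = 2" by (auto intro: mod4_form)
      then show "E x < 2 * real m / pi" unfolding E_def using m4 i K by (intro G_lt) auto
    qed
    show "sorted_wrt (\<lambda>a b. a > b)
           (map (\<lambda>r. energy_D_negneg r (m - r))
              (map (\<lambda>i. 4 * (i + 1)) [0..<m div 8] @
               map (\<lambda>i. m div 2 - 4 * i) [0..<m div 8 + 1]))"
    proof -
      have fe: "(\<lambda>r. energy_D_negneg r (m - r)) = E" by (simp add: E_def fun_eq_iff)
      have "\<forall>x\<in>set (map (\<lambda>i. 4 * (i + 1)) [0..<m div 8]). \<forall>y\<in>set (map (\<lambda>i. m div 2 - 4 * i) [0..<m div 8 + 1]). E x > E y"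
        using xsb ysb by (meson less_trans)
      then show ?thesis unfolding fe sorted_app using xs ys by blast
    qed
  qed
  show ?thesis using part1 part2 part3 by blast
qed

end
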